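(* For any $0<r<\log 1.01$ and any $s\in\mathbb{R}$ with $6r\le|s|\le\log 1.9$, we have $a_sK_r\cap K_r=\varnothing$.
   Context: $X=\mathrm{SL}_2(\mathbb{R})/\mathrm{SL}_2(\mathbb{Z})$ is the space of unimodular lattices in $\mathbb{R}^2$. $\|\cdot\|$ is the supremum norm on $\mathbb{R}^2$. For $\Lambda\in X$ let $\Delta(\Lambda)=\sup_{v\in\Lambda\smallsetminus\{0\}}\log(1/\|v\|)$, and for $r\ge0$ let $K_r=\Delta^{-1}([0,r])$. $a_s=\mathrm{diag}(e^s,e^{-s})$ acts on $X$ by left multiplication. *)

theory Defs
  imports "HOL-Analysis.Analysis"
begin

definition supnorm :: "real \<times> real \<Rightarrow> real" where
  "supnorm v = max \<bar>fst v\<bar> \<bar>snd v\<bar>"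

text \<open>The lattice g Z^2 spanned by the columns u, v of g.\<close>
definition lattice_of :: "real \<times> real \<Rightarrow> real \<times> real \<Rightarrow> (real \<times> real) set" where
  "lattice_of u v = {(of_int m * fst u + of_int n * fst v, of_int m * snd u + of_int n * snd v) | m n :: int. True}"

text \<open>X = SL_2(R)/SL_2(Z): the unimodular lattices g Z^2 with det g = 1.\<close>
definition unimodular_lattices :: "(real \<times> real) set set" where
  "unimodular_lattices = {lattice_of u v | u v. fst u * snd v - fst v * snd u = 1}"

definition Delta :: "(real \<times> real) set \<Rightarrow> real" where
  "Delta L = (SUP v \<in> L - {(0,0)}. ln (1 / supnorm v))"

definition K :: "real \<Rightarrow> (real \<times> real) set set" where
  "K r = {L \<in> unimodular_lattices. Delta L \<le> r}"

definition a_act :: "real \<Rightarrow> real \<times> real \<Rightarrow> real \<times> real" where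
  "a_act s v = (exp s * fst v, exp (- s) * snd v)"

end

theory Submission
  imports Defs
begin

definition cell :: "int \<times> int \<Rightarrow> (real^2) set" where
  "cell k = {z. of_int (fst k) \<le> z$1 \<and> z$1 < of_int (fst k) + 1 \<and> of_int (snd k) \<le> z$2 \<and> z$2 < of_int (snd k) + 1}"

lemma cell_sets: "cell k \<in> sets lebesgue"
proof -
  have "cell k = {z. of_int (fst k) \<le> z$1} \<inter> {z. z$1 < of_int (fst k) + 1} \<inter> {z. of_int (snd k) \<le> z$2} \<inter> {z. z$2 < of_int (snd k) + 1}"
    by (auto simp: cell_def)
  moreover have "closed {z::real^2. of_int (fst k) \<le> z$1}" "closed {z::real^2. of_int (snd k) \<le> z$2}"
    by (auto intro!: closed_Collect_le continuous_intros)
  moreover have "open {z::real^2. z$1 < of_int (fst k) + 1}" "open {z::real^2. z$2 < of_int (snd k) + 1}"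
    by (auto intro!: open_Collect_less continuous_intros)
  ultimately show ?thesis
    by (metis borel_closed borel_open sets.Int sets_completionI_sets sets_lborel)
qed

lemma blichfeldt:
  fixes A :: "(real^2) set"
  assumes meas: "A \<in> lmeasurable" and bnd: "bounded A" and big: "measure lebesgue A > 1"
  shows "\<exists>x\<in>A. \<exists>y\<in>A. x \<noteq> y \<and> (x - y)$1 \<in> \<int> \<and> (x - y)$2 \<in> \<int>"
proof (rule ccontr)
  assume no: "\<not> ?thesis"
  obtain B where B: "\<And>x. x \<in> A \<Longrightarrow> norm x \<le> B" using bnd bounded_iff by blast
  define N :: int where "N = \<lceil>B\<rceil>"
  define I where "I = {-N-1..N} \<times> {-N-1..N}"
  have finI: "finite I" by (simp add: I_def)
  define vk :: "int \<times> int \<Rightarrow> real^2" where "vk k = vector [of_int (fst k), of_int (snd k)]" for k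
  define D where "D k = (\<lambda>z. z - vk k) ` (A \<inter> cell k)" for k
  have cellm: "A \<inter> cell k \<in> lmeasurable" for k
    using meas cell_sets by (simp add: fmeasurable_Int_fmeasurable)
  have Dm: "D k \<in> lmeasurable" for k
    unfolding D_def by (rule measurable_translation_subtract[OF cellm])
  have Dmeas: "measure lebesgue (D k) = measure lebesgue (A \<inter> cell k)" for k
    unfolding D_def by (rule measure_translation_subtract)
  have Asplit: "A = (\<Union>k\<in>I. A \<inter> cell k)"
  proof safe
    fix x assume x: "x \<in> A"
    have n: "\<bar>x$i\<bar> \<le> B" for i using B[OF x] component_le_norm_cart order_trans by blast
    define k where "k = (\<lfloor>x$1\<rfloor>, \<lfloor>x$2\<rfloor>)"
    have "x \<in> cell k" unfolding cell_def k_def by auto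
    moreover have "k \<in> I"
    proof -
      have "\<bar>x$1\<bar> \<le> B" "\<bar>x$2\<bar> \<le> B" using n by auto
      hence "-N-1 \<le> \<lfloor>x$1\<rfloor> \<and> \<lfloor>x$1\<rfloor> \<le> N \<and> -N-1 \<le> \<lfloor>x$2\<rfloor> \<and> \<lfloor>x$2\<rfloor> \<le> N"
        unfolding N_def by (auto simp: abs_le_iff) linarith+
      thus ?thesis by (auto simp: I_def k_def)
    qed
    ultimately show "x \<in> (\<Union>k\<in>I. A \<inter> cell k)" using x by blast
  qed
  have celldisj: "disjoint_family_on (\<lambda>k. A \<inter> cell k) I"
    unfolding disjoint_family_on_def cell_def
    by (auto simp: prod_eq_iff)
  have "measure lebesgue A = (\<Sum>k\<in>I. measure lebesgue (A \<inter> cell k))"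
  proof (subst Asplit, rule measure_finite_Union[OF finI])
    show "(\<lambda>k. A \<inter> cell k) ` I \<subseteq> sets lebesgue" using cellm by (auto simp: fmeasurable_def)
    show "\<And>i. i \<in> I \<Longrightarrow> emeasure lebesgue (A \<inter> cell i) \<noteq> \<infinity>"
      using cellm by (metis fmeasurable_def infinity_ennreal_def mem_Collect_eq order_less_irrefl sets.Int_space_eq2)
  qed (rule celldisj)
  also have "\<dots> = (\<Sum>k\<in>I. measure lebesgue (D k))" by (simp add: Dmeas)
  also have "\<dots> = measure lebesgue (\<Union>k\<in>I. D k)"
  proof (rule measure_finite_Union[OF finI, symmetric])
    show "D ` I \<subseteq> sets lebesgue" using Dm by (auto simp: fmeasurable_def)
    show "\<And>i. i \<in> I \<Longrightarrow> emeasure lebesgue (D i) \<noteq> \<infinity>" using Dm fmeasurableD2 by (metis infinity_ennreal_def)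
    show "disjoint_family_on D I"
    proof (unfold disjoint_family_on_def, intro ballI impI)
      fix k l assume "k \<in> I" "l \<in> I" "k \<noteq> l"
      show "D k \<inter> D l = {}"
      proof (rule ccontr)
        assume "D k \<inter> D l \<noteq> {}"
        then obtain x y where x: "x \<in> A" "y \<in> A" and eq: "x - vk k = y - vk l"
          unfolding D_def by blast
        have "x - y = vk k - vk l" using eq by (simp add: algebra_simps)
        hence c1: "(x - y)$1 = of_int (fst k - fst l)" and c2: "(x - y)$2 = of_int (snd k - snd l)"
          by (simp_all add: vk_def)
        have "x \<noteq> y"
        proof
          assume "x = y"
          hence "fst k = fst l" "snd k = snd l" using c1 c2 by simp_all
          thus False using \<open>k \<noteq> l\<close> by (simp add: prod_eq_iff)
        qed
        thus False using no x c1 c2 by (metis Ints_of_int)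
      qed
    qed
  qed
  also have "\<dots> \<le> measure lebesgue (cbox (0::real^2) 1)"
  proof (rule measure_mono_fmeasurable)
    show "(\<Union>k\<in>I. D k) \<subseteq> cbox 0 1"
    proof
      fix z assume "z \<in> (\<Union>k\<in>I. D k)"
      then obtain k x where "x \<in> cell k" "z = x - vk k" unfolding D_def by blast
      thus "z \<in> cbox 0 1"
        by (auto simp: cell_def vk_def mem_box_cart forall_2)
    qed
    show "(\<Union>k\<in>I. D k) \<in> sets lebesgue" using Dm finI by (auto simp: fmeasurable_def)
  qed auto
  also have "\<dots> = 1"
  proof -
    have "(0::real^2) \<in> cbox 0 1" by (simp add: mem_box_cart)
    hence ne: "cbox (0::real^2) 1 \<noteq> {}" by blast
    have "measure lborel (cbox (0::real^2) 1) = 1" by (simp add: content_cbox_cart[OF ne] UNIV_2)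
    thus ?thesis by (subst measure_completion) auto
  qed
  finally show False using big by simp
qed

lemma minkowski:
  fixes H :: "(real^2) set" and u v :: "real^2"
  assumes cvx: "convex H" and sym: "\<And>x. x \<in> H \<Longrightarrow> -x \<in> H"
    and Hm: "H \<in> lmeasurable" and Hb: "bounded H" and big: "measure lebesgue H > 4"
    and D: "\<bar>u$1 * v$2 - v$1 * u$2\<bar> = 1"
  shows "\<exists>m n::int. (m, n) \<noteq> (0, 0) \<and> of_int m *\<^sub>R u + of_int n *\<^sub>R v \<in> H"
proof -
  define d where "d = u$1 * v$2 - v$1 * u$2"
  have d0: "d \<noteq> 0" using D d_def by auto
  define g :: "real^2 \<Rightarrow> real^2" where "g z = 2 *\<^sub>R (z$1 *\<^sub>R u + z$2 *\<^sub>R v)" for z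
  define S :: "real^2 \<Rightarrow> real^2" where
    "S z = vector [(v$2*z$1 - v$1*z$2)/(2*d), (u$1*z$2 - u$2*z$1)/(2*d)]" for z
  have lg: "linear g" unfolding g_def
    by (intro linearI) (auto simp: algebra_simps)
  have lS: "linear S" unfolding S_def
    by (intro linearI) (auto simp: vec_eq_iff forall_2 add_divide_distrib[symmetric] diff_divide_distrib[symmetric] algebra_simps)
  have gS: "g (S z) = z" for z
  proof -
    have e1: "(v$2*z$1 - v$1*z$2) * u$1 + (u$1*z$2 - u$2*z$1) * v$1 = z$1 * d"
      by (simp add: d_def algebra_simps)
    have e2: "(v$2*z$1 - v$1*z$2) * u$2 + (u$1*z$2 - u$2*z$1) * v$2 = z$2 * d"
      by (simp add: d_def algebra_simps)
    have "2 * ((v$2*z$1 - v$1*z$2)/(2*d) * u$1 + (u$1*z$2 - u$2*z$1)/(2*d) * v$1) = z$1"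
      using e1 d0 by (simp add: field_simps)
    moreover have "2 * ((v$2*z$1 - v$1*z$2)/(2*d) * u$2 + (u$1*z$2 - u$2*z$1)/(2*d) * v$2) = z$2"
      using e2 d0 by (simp add: field_simps)
    ultimately show ?thesis unfolding g_def S_def by (auto simp: vec_eq_iff forall_2)
  qed
  define A where "A = S ` H"
  have Am: "A \<in> lmeasurable" unfolding A_def by (rule measurable_linear_image[OF lS Hm])
  have Ab: "bounded A" unfolding A_def using Hb lS by (simp add: bounded_linear_image linear_conv_bounded_linear)
  have gA: "g ` A = H" unfolding A_def using gS by (force simp: image_image)
  have detg: "det (matrix g) = 4 * d"
    by (simp add: det_2 matrix_def g_def axis_def d_def algebra_simps)
  have "measure lebesgue H = 4 * measure lebesgue A"
  proof -
    have "\<bar>det (matrix g)\<bar> = 4" using detg D d_def by (simp add: abs_mult)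
    thus ?thesis using measure_linear_image[OF lg Am] gA by simp
  qed
  hence "measure lebesgue A > 1" using big by simp
  then obtain x y where xy: "x \<in> A" "y \<in> A" "x \<noteq> y" "(x - y)$1 \<in> \<int>" "(x - y)$2 \<in> \<int>"
    using blichfeldt[OF Am Ab] by blast
  obtain m where m: "(x - y)$1 = of_int m" using xy(4) Ints_cases by metis
  obtain n where n: "(x - y)$2 = of_int n" using xy(5) Ints_cases by metis
  have mn: "(m, n) \<noteq> (0, 0)"
  proof
    assume "(m, n) = (0, 0)"
    hence "x - y = 0" using m n by (auto simp: vec_eq_iff forall_2)
    thus False using xy(3) by simp
  qed
  obtain p q where p: "p \<in> H" "x = S p" and q: "q \<in> H" "y = S q" using xy(1,2) A_def by blast
  have "of_int m *\<^sub>R u + of_int n *\<^sub>R v = (1/2) *\<^sub>R g (x - y)"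
    using m n by (simp add: g_def)
  also have "\<dots> = (1/2) *\<^sub>R p + (1/2) *\<^sub>R (-q)"
  proof -
    have "g (x - y) = p - q" using p q gS linear_diff[OF lg, of x y] by simp
    thus ?thesis by (simp add: scaleR_diff_right scaleR_add_right)
  qed
  also have "\<dots> \<in> H" using cvx p q sym by (intro convexD) auto
  finally show ?thesis using mn by blast
qed

lemma convex_abs_lin:
  assumes "p \<ge> 0" "q \<ge> 0"
  shows "convex {z::real^2. p * \<bar>z$1\<bar> + q * \<bar>z$2\<bar> \<le> c}"
proof (unfold convex_def, safe)
  fix x y :: "real^2" and u v :: real
  assume x: "p * \<bar>x$1\<bar> + q * \<bar>x$2\<bar> \<le> c" and y: "p * \<bar>y$1\<bar> + q * \<bar>y$2\<bar> \<le> c"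
    and u: "0 \<le> u" and v: "0 \<le> v" and uv: "u + v = 1"
  have a1: "\<bar>u * x$1 + v * y$1\<bar> \<le> u * \<bar>x$1\<bar> + v * \<bar>y$1\<bar>"
    using u v by (metis abs_mult abs_of_nonneg abs_triangle_ineq)
  have a2: "\<bar>u * x$2 + v * y$2\<bar> \<le> u * \<bar>x$2\<bar> + v * \<bar>y$2\<bar>"
    using u v by (metis abs_mult abs_of_nonneg abs_triangle_ineq)
  have "p * \<bar>u * x$1 + v * y$1\<bar> + q * \<bar>u * x$2 + v * y$2\<bar> \<le> p * (u * \<bar>x$1\<bar> + v * \<bar>y$1\<bar>) + q * (u * \<bar>x$2\<bar> + v * \<bar>y$2\<bar>)"
    using a1 a2 assms by (intro add_mono mult_left_mono) auto
  also have "\<dots> = u * (p * \<bar>x$1\<bar> + q * \<bar>x$2\<bar>) + v * (p * \<bar>y$1\<bar> + q * \<bar>y$2\<bar>)" by (simp add: algebra_simps)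
  also have "\<dots> \<le> u * c + v * c" using x y u v by (intro add_mono mult_left_mono) auto
  also have "\<dots> = c" by (metis uv distrib_right mult_1)
  finally show "p * \<bar>(u *\<^sub>R x + v *\<^sub>R y)$1\<bar> + q * \<bar>(u *\<^sub>R x + v *\<^sub>R y)$2\<bar> \<le> c" by simp
qed

lemma convex_ge2: "convex {z::real^2. c \<le> z$2}"
proof (unfold convex_def, safe)
  fix x y :: "real^2" and u v :: real
  assume x: "c \<le> x$2" and y: "c \<le> y$2" and u: "0 \<le> u" and v: "0 \<le> v" and uv: "u + v = 1"
  have "u * c + v * c \<le> u * x$2 + v * y$2" using x y u v by (intro add_mono mult_left_mono) auto
  moreover have "u * c + v * c = c" by (metis uv distrib_right mult_1)
  ultimately show "c \<le> (u *\<^sub>R x + v *\<^sub>R y)$2" by simp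
qed

lemma convex_le2: "convex {z::real^2. z$2 \<le> c}"
proof (unfold convex_def, safe)
  fix x y :: "real^2" and u v :: real
  assume x: "x$2 \<le> c" and y: "y$2 \<le> c" and u: "0 \<le> u" and v: "0 \<le> v" and uv: "u + v = 1"
  have "u * x$2 + v * y$2 \<le> u * c + v * c" using x y u v by (intro add_mono mult_left_mono) auto
  moreover have "u * c + v * c = c" by (metis uv distrib_right mult_1)
  ultimately show "(u *\<^sub>R x + v *\<^sub>R y)$2 \<le> c" by simp
qed

definition hexa :: "real \<Rightarrow> real \<Rightarrow> real \<Rightarrow> (real^2) set" where
  "hexa a b h = {z. 1* \<bar>z$1\<bar> + 0* \<bar>z$2\<bar> \<le> a} \<inter> {z. (b - h)* \<bar>z$1\<bar> + a * \<bar>z$2\<bar> \<le> a * b}"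

lemma hexa_convex: "0 < a \<Longrightarrow> h \<le> b \<Longrightarrow> convex (hexa a b h)"
  unfolding hexa_def by (intro convex_Int convex_abs_lin) auto

lemma hexa_sym: "x \<in> hexa a b h \<Longrightarrow> -x \<in> hexa a b h"
  by (simp add: hexa_def)

lemma hexa_closed: "closed (hexa a b h)"
  unfolding hexa_def by (intro closed_Int closed_Collect_le continuous_intros)

lemma hexa_bounded: assumes "0 < a" "h \<le> b" shows "bounded (hexa a b h)"
proof -
  have "norm z \<le> a + b" if "z \<in> hexa a b h" for z
  proof -
    have "a * \<bar>z$2\<bar> \<le> a * b" using that assms unfolding hexa_def
      by (smt (verit, best) mem_Collect_eq mem_simps(4) mult_nonneg_nonneg abs_ge_zero)
    hence "\<bar>z$2\<bar> \<le> b" using assms by simp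
    moreover have "\<bar>z$1\<bar> \<le> a" using that unfolding hexa_def by simp
    ultimately show ?thesis using norm_le_l1_cart[of z] by (simp add: sum_2)
  qed
  thus ?thesis unfolding bounded_iff by blast
qed

lemma hexa_measure:
  assumes a: "0 < a" and h: "0 \<le> h" and hb: "h \<le> b"
  shows "measure lebesgue (hexa a b h) \<ge> 2 * a * (b + h)"
proof -
  define B :: "(real^2) set" where "B = cbox (vector [-a, -h]) (vector [a, h])"
  define T1 :: "(real^2) set" where "T1 = convex hull {vector [a, h], vector [-a, h], vector [0, b]}"
  define T2 :: "(real^2) set" where "T2 = convex hull {vector [a, -h], vector [-a, -h], vector [0, -b]}"
  have Hc: "convex (hexa a b h)" using a hb by (rule hexa_convex)
  have Hm: "hexa a b h \<in> lmeasurable"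
    using hexa_closed hexa_bounded[OF a hb] by (simp add: lmeasurable_compact compact_eq_bounded_closed)
  have in1: "vector [a, h] \<in> hexa a b h" "vector [-a, h] \<in> hexa a b h" "vector [0, b] \<in> hexa a b h"
    "vector [a, -h] \<in> hexa a b h" "vector [-a, -h] \<in> hexa a b h" "vector [0, -b] \<in> hexa a b h"
    using a h hb by (auto simp: hexa_def algebra_simps)
  have T1H: "T1 \<subseteq> hexa a b h \<inter> {z. h \<le> z$2}"
    unfolding T1_def using in1 h hb
    by (intro hull_minimal convex_Int Hc convex_ge2) auto
  have T2H: "T2 \<subseteq> hexa a b h \<inter> {z. z$2 \<le> -h}"
    unfolding T2_def using in1 h hb
    by (intro hull_minimal convex_Int Hc convex_le2) auto
  have BH: "B \<subseteq> hexa a b h \<inter> {z. -h \<le> z$2 \<and> z$2 \<le> h}"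
  proof
    fix z assume "z \<in> B"
    hence z: "-a \<le> z$1" "z$1 \<le> a" "-h \<le> z$2" "z$2 \<le> h"
      by (auto simp: B_def mem_box_cart forall_2)
    have "(b - h) * \<bar>z$1\<bar> + a * \<bar>z$2\<bar> \<le> (b - h) * a + a * h"
      using z a hb by (intro add_mono mult_left_mono) auto
    thus "z \<in> hexa a b h \<inter> {z. -h \<le> z$2 \<and> z$2 \<le> h}" using z by (auto simp: hexa_def algebra_simps)
  qed
  have cT1: "compact T1" "compact T2" unfolding T1_def T2_def
    by (auto intro: finite_imp_compact_convex_hull)
  have mB: "measure lebesgue B = 4 * a * h"
  proof -
    have "vector [-a, -h] \<in> B" using a h by (auto simp: B_def mem_box_cart forall_2)
    hence ne: "B \<noteq> {}" by blast
    have "measure lborel B = 4 * a * h" unfolding B_def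
      using ne by (simp add: content_cbox_cart[OF ne[unfolded B_def]] UNIV_2)
    thus ?thesis by (subst measure_completion) (auto simp: B_def)
  qed
  have mT1: "measure lebesgue T1 = a * (b - h)"
  proof -
    have "measure lborel T1 = a * (b - h)" unfolding T1_def
      using a hb by (simp add: content_triangle abs_mult)
    thus ?thesis using cT1 by (subst measure_completion) (auto dest: compact_imp_closed)
  qed
  have mT2: "measure lebesgue T2 = a * (b - h)"
  proof -
    have "measure lborel T2 = a * (b - h)" unfolding T2_def
      using a hb by (simp add: content_triangle abs_mult)
    thus ?thesis using cT1 by (subst measure_completion) (auto dest: compact_imp_closed)
  qed
  have hyp: "negligible {z::real^2. z$2 = c}" for c
  proof -
    have "{z::real^2. z$2 = c} = {z. axis 2 1 \<bullet> z = c}" by (simp add: cart_eq_inner_axis inner_commute)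
    thus ?thesis using negligible_hyperplane[of "axis 2 (1::real)" c] by (simp add: axis_eq_0_iff)
  qed
  have n1: "negligible (B \<inter> T1)"
    by (rule negligible_subset[OF hyp[of h]]) (use BH T1H in \<open>force simp: subset_iff\<close>)
  have n2: "negligible (B \<inter> T2)"
    by (rule negligible_subset[OF hyp[of "-h"]]) (use BH T2H in \<open>force simp: subset_iff\<close>)
  have n3: "negligible (T1 \<inter> T2)"
  proof (cases "h = 0")
    case True thus ?thesis by (intro negligible_subset[OF hyp[of 0]]) (use T1H T2H in \<open>force simp: subset_iff\<close>)
  next
    case False hence "T1 \<inter> T2 = {}" using T1H T2H h by fastforce
    thus ?thesis by simp
  qed
  have "measure lebesgue (B \<union> T1 \<union> T2) = 4 * a * h + a * (b - h) + a * (b - h)"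
    using measure_Un3_negligible[OF _ _ _ n1 n2 n3 refl] mB mT1 mT2 cT1
    by (simp add: B_def lmeasurable_compact)
  also have "\<dots> = 2 * a * (b + h)" by (simp add: algebra_simps)
  finally have "measure lebesgue (B \<union> T1 \<union> T2) = 2 * a * (b + h)" .
  moreover have "measure lebesgue (B \<union> T1 \<union> T2) \<le> measure lebesgue (hexa a b h)"
  proof (rule measure_mono_fmeasurable[OF _ _ Hm])
    show "B \<union> T1 \<union> T2 \<subseteq> hexa a b h" using BH T1H T2H by blast
    have "B \<union> T1 \<union> T2 \<in> lmeasurable" using cT1
      by (intro fmeasurable.Un lmeasurable_compact) (auto simp: B_def)
    thus "B \<union> T1 \<union> T2 \<in> sets lebesgue" by (rule fmeasurableD)
  qed
  ultimately show ?thesis by simp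
qed

lemma supnorm_pos: "w \<noteq> (0,0) \<Longrightarrow> supnorm w > 0"
  by (cases w) (auto simp: supnorm_def max_def)

lemma Delta_ge:
  assumes L: "L \<in> unimodular_lattices" and w: "w \<in> L" "w \<noteq> (0,0)"
  shows "ln (1 / supnorm w) \<le> Delta L"
proof -
  obtain u v where uv: "L = lattice_of u v" "fst u * snd v - fst v * snd u = 1"
    using L unfolding unimodular_lattices_def by blast
  define C where "C = \<bar>fst u\<bar> + \<bar>snd u\<bar> + \<bar>fst v\<bar> + \<bar>snd v\<bar>"
  have bnd: "1 \<le> C * supnorm z" if z: "z \<in> L" "z \<noteq> (0,0)" for z
  proof -
    obtain m n :: int where zmn: "z = (of_int m * fst u + of_int n * fst v, of_int m * snd u + of_int n * snd v)"
      using z(1) uv(1) unfolding lattice_of_def by blast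
    have em: "of_int m = snd v * fst z - fst v * snd z" using zmn uv(2)
      by (simp add: algebra_simps)
    have en: "of_int n = fst u * snd z - snd u * fst z" using zmn uv(2)
      by (simp add: algebra_simps)
    have mn: "m \<noteq> 0 \<or> n \<noteq> 0" using z(2) zmn by auto
    have s1: "\<bar>fst z\<bar> \<le> supnorm z" "\<bar>snd z\<bar> \<le> supnorm z" by (auto simp: supnorm_def)
    have bm: "\<bar>of_int m :: real\<bar> \<le> \<bar>snd v\<bar> * supnorm z + \<bar>fst v\<bar> * supnorm z"
    proof -
      have "\<bar>snd v * fst z - fst v * snd z\<bar> \<le> \<bar>snd v\<bar> * \<bar>fst z\<bar> + \<bar>fst v\<bar> * \<bar>snd z\<bar>"
        by (metis abs_mult abs_triangle_ineq4)
      also have "\<dots> \<le> \<bar>snd v\<bar> * supnorm z + \<bar>fst v\<bar> * supnorm z"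
        using s1 by (intro add_mono mult_left_mono) auto
      finally show ?thesis unfolding em .
    qed
    have bn: "\<bar>of_int n :: real\<bar> \<le> \<bar>fst u\<bar> * supnorm z + \<bar>snd u\<bar> * supnorm z"
    proof -
      have "\<bar>fst u * snd z - snd u * fst z\<bar> \<le> \<bar>fst u\<bar> * \<bar>snd z\<bar> + \<bar>snd u\<bar> * \<bar>fst z\<bar>"
        by (metis abs_mult abs_triangle_ineq4)
      also have "\<dots> \<le> \<bar>fst u\<bar> * supnorm z + \<bar>snd u\<bar> * supnorm z"
        using s1 by (intro add_mono mult_left_mono) auto
      finally show ?thesis unfolding en .
    qed
    have b1: "1 \<le> \<bar>of_int m :: real\<bar> \<or> 1 \<le> \<bar>of_int n :: real\<bar>" using mn by linarith
    have s0: "0 \<le> supnorm z" by (simp add: supnorm_def)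
    show ?thesis
    proof -
      have "C * supnorm z = (\<bar>snd v\<bar> * supnorm z + \<bar>fst v\<bar> * supnorm z) + (\<bar>fst u\<bar> * supnorm z + \<bar>snd u\<bar> * supnorm z)"
        by (simp add: C_def algebra_simps)
      moreover have "0 \<le> \<bar>snd v\<bar> * supnorm z + \<bar>fst v\<bar> * supnorm z" "0 \<le> \<bar>fst u\<bar> * supnorm z + \<bar>snd u\<bar> * supnorm z"
        using \<open>0 \<le> supnorm z\<close> by auto
      ultimately show ?thesis using bm bn b1 by linarith
    qed
  qed
  have lnb: "ln (1 / supnorm z) \<le> ln C" if z: "z \<in> L" "z \<noteq> (0,0)" for z
  proof -
    have sp: "supnorm z > 0" using supnorm_pos z(2) .
    have "1 / supnorm z \<le> C" using bnd[OF z] sp by (simp add: field_simps)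
    thus ?thesis using sp by (intro ln_mono) auto
  qed
  have "bdd_above ((\<lambda>v. ln (1 / supnorm v)) ` (L - {(0,0)}))"
    using lnb by (intro bdd_aboveI[of _ "ln C"]) auto
  thus ?thesis unfolding Delta_def using w by (intro cSUP_upper) auto
qed

lemma K_supnorm:
  assumes "L \<in> K r" "w \<in> L" "w \<noteq> (0,0)"
  shows "supnorm w \<ge> exp (- r)"
proof -
  have L: "L \<in> unimodular_lattices" "Delta L \<le> r" using assms(1) by (auto simp: K_def)
  have sp: "supnorm w > 0" using supnorm_pos assms(3) .
  have "ln (1 / supnorm w) \<le> r" using Delta_ge[OF L(1) assms(2,3)] L(2) by linarith
  hence "1 / supnorm w \<le> exp r" using sp by (metis exp_le_cancel_iff exp_ln zero_less_divide_1_iff)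
  thus ?thesis using sp by (simp add: exp_minus field_simps)
qed

lemma hex_lattice_point:
  fixes a b h p1 p2 q1 q2 :: real
  assumes a: "0 < a" and h: "0 \<le> h" "h \<le> b" and big: "2 * a * (b + h) > 4"
    and D: "\<bar>p1 * q2 - q1 * p2\<bar> = 1"
  shows "\<exists>m n::int. (m, n) \<noteq> (0, 0) \<and> \<bar>of_int m * p1 + of_int n * q1\<bar> \<le> a \<and>
     (b - h) * \<bar>of_int m * p1 + of_int n * q1\<bar> + a * \<bar>of_int m * p2 + of_int n * q2\<bar> \<le> a * b"
proof -
  have "\<exists>m n::int. (m, n) \<noteq> (0, 0) \<and> of_int m *\<^sub>R vector [p1, p2] + of_int n *\<^sub>R vector [q1, q2] \<in> hexa a b h"
  proof (rule minkowski)
    show "convex (hexa a b h)" using a h by (intro hexa_convex) auto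
    show "hexa a b h \<in> lmeasurable"
      using hexa_closed hexa_bounded[OF a h(2)] by (simp add: lmeasurable_compact compact_eq_bounded_closed)
    show "bounded (hexa a b h)" using hexa_bounded[OF a h(2)] .
    show "4 < measure lebesgue (hexa a b h)" using hexa_measure[OF a h] big by linarith
    show "\<bar>(vector [p1, p2]::real^2) $ 1 * (vector [q1, q2]::real^2) $ 2 - (vector [q1, q2]::real^2) $ 1 * (vector [p1, p2]::real^2) $ 2\<bar> = 1"
      using D by simp
  qed (rule hexa_sym)
  thus ?thesis by (auto simp: hexa_def)
qed

lemma hex_small:
  fixes x y d t th :: real
  assumes d: "0 < d" and t: "1 < t" "t \<le> 2" and th: "0 < th" "th < 1"
    and hx: "\<bar>x\<bar> \<le> th * d"
    and hy: "(th * d * t - th * d * t * (2 - t)) * \<bar>x\<bar> + th * d * \<bar>y\<bar> \<le> th * d * (th * d * t)"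
  shows "(\<bar>x\<bar> < d \<and> \<bar>y\<bar> < d) \<or> (t * \<bar>x\<bar> < d \<and> \<bar>y\<bar> < d * t)"
proof (cases "\<bar>y\<bar> < d")
  case True
  have "th * d < d" using th d by simp
  thus ?thesis using True hx by auto
next
  case False
  have bh: "th * d * t - th * d * t * (2 - t) = th * d * t * (t - 1)" by (simp add: algebra_simps)
  have bhp: "th * d * t * (t - 1) \<ge> 0" using th d t by simp
  have thd: "th * d > 0" using th d by simp
  have "th * d * \<bar>y\<bar> \<le> th * d * (th * d * t)"
    using hy bh bhp by (smt (verit) abs_ge_zero mult_nonneg_nonneg)
  hence "\<bar>y\<bar> \<le> th * d * t" using thd by (metis mult_le_cancel_left_pos)
  also have "\<dots> < d * t" using th d t by simp
  finally have y1: "\<bar>y\<bar> < d * t" .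
  have "t * \<bar>x\<bar> < d"
  proof (rule ccontr)
    assume "\<not> t * \<bar>x\<bar> < d"
    hence tx: "d \<le> t * \<bar>x\<bar>" by simp
    have "th * d * (t - 1) * d \<le> th * d * (t - 1) * (t * \<bar>x\<bar>)"
      using tx th d t by (intro mult_left_mono) auto
    hence e1: "th * d * (t - 1) * d \<le> th * d * t * (t - 1) * \<bar>x\<bar>" by (simp add: algebra_simps)
    have e2: "th * d * d \<le> th * d * \<bar>y\<bar>" using False thd by (intro mult_left_mono) auto
    have "th * d * (t - 1) * d + th * d * d \<le> th * d * (th * d * t)"
      using e1 e2 hy[unfolded bh] by linarith
    hence "th * d * d * t \<le> th * d * d * (th * t)" by (simp add: algebra_simps)
    moreover have "th * d * d > 0" using thd d by simp
    ultimately have "t \<le> th * t" by (metis mult.assoc mult_le_cancel_left_pos)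
    thus False using th t by simp
  qed
  thus ?thesis using y1 by auto
qed

lemma poly_aux:
  fixes w :: real assumes w: "1 < w" "w < 10201/10000"
  shows "w^3 * (3 - w^3) > 2 * w"
proof -
  have w4: "w^4 < 4/3"
  proof -
    have "w^4 \<le> (10201/10000)^4" using w by (intro power_mono) auto
    also have "\<dots> < 4/3" by (simp add: eval_nat_numeral)
    finally show ?thesis .
  qed
  have "w^2 \<le> w^4" "w^3 \<le> w^4" using w by (auto intro: power_increasing)
  hence "w^4 + w^3 + w^2 < 2 + 2*w" using w4 w by linarith
  hence "0 < (w - 1) * (2 + 2*w - w^4 - w^3 - w^2)" using w by (intro mult_pos_pos) auto
  hence "0 < w * ((w - 1) * (2 + 2*w - w^4 - w^3 - w^2))" using w by simp
  moreover have "w * ((w - 1) * (2 + 2*w - w^4 - w^3 - w^2)) = w^3 * (3 - w^3) - 2 * w" by algebra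
  ultimately show ?thesis by linarith
qed

lemma numeric:
  fixes r s :: real
  assumes "0 < r" and "r < ln (101 / 100)"
    and "6 * r \<le> \<bar>s\<bar>" and "\<bar>s\<bar> \<le> ln (19 / 10)"
  shows "exp (- r) ^ 2 * exp \<bar>s\<bar> * (3 - exp \<bar>s\<bar>) > 2" and "1 < exp \<bar>s\<bar>" and "exp \<bar>s\<bar> \<le> 19/10"
proof -
  define w where "w = exp r ^ 2"
  define t where "t = exp \<bar>s\<bar>"
  have E1: "1 < exp r" using assms(1) by simp
  have E2: "exp r < 101/100" using assms(2)
    by (metis exp_less_cancel_iff exp_ln zero_less_divide_iff zero_less_numeral)
  have w1: "1 < w" unfolding w_def using E1 by (simp add: one_less_power)
  have "w < (101/100)^2" unfolding w_def using E1 E2 by (intro power_strict_mono) auto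
  hence w2: "w < 10201/10000" by (simp add: eval_nat_numeral)
  have t3: "w^3 \<le> t"
  proof -
    have "w^3 = exp r ^ 6" unfolding w_def by (simp add: power_mult[symmetric])
    also have "\<dots> = exp (6 * r)" by (simp add: exp_of_nat_mult[symmetric])
    also have "\<dots> \<le> t" unfolding t_def using assms(3) by simp
    finally show ?thesis .
  qed
  have tup: "t \<le> 19/10" unfolding t_def using assms(4) by (metis exp_le_cancel_iff exp_ln zero_less_divide_iff zero_less_numeral)
  have tpos: "1 < t" unfolding t_def using assms(1,3) by simp
  have key: "t * (3 - t) > 2 * w"
  proof (cases "t \<le> 3/2")
    case True
    have w3: "w^3 < 11/10"
    proof -
      have "w^3 \<le> (10201/10000)^3" using w1 w2 by (intro power_mono) auto
      also have "\<dots> < 11/10" by (simp add: eval_nat_numeral)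
      finally show ?thesis .
    qed
    have "0 \<le> (t - w^3) * (3 - t - w^3)" using t3 True w3 by (intro mult_nonneg_nonneg) auto
    moreover have "(t - w^3) * (3 - t - w^3) = t * (3 - t) - w^3 * (3 - w^3)" by algebra
    ultimately show ?thesis using poly_aux[OF w1 w2] by linarith
  next
    case False
    have "0 \<le> (19/10 - t) * (t - 11/10)" using False tup by (intro mult_nonneg_nonneg) auto
    moreover have "(19/10 - t) * (t - 11/10) = t * (3 - t) - 209/100" by algebra
    ultimately show ?thesis using w2 by linarith
  qed
  have "exp (- r) ^ 2 = 1 / w" unfolding w_def by (simp add: exp_minus inverse_eq_divide power_divide)
  hence "exp (- r) ^ 2 * t * (3 - t) = t * (3 - t) / w" by simp
  also have "\<dots> > 2" using key w1 by (simp add: less_divide_eq)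
  finally show "exp (- r) ^ 2 * exp \<bar>s\<bar> * (3 - exp \<bar>s\<bar>) > 2" unfolding t_def .
  show "1 < exp \<bar>s\<bar>" "exp \<bar>s\<bar> \<le> 19/10" using tpos tup t_def by auto
qed

theorem lemma3p2:
  fixes r s :: real
  assumes "0 < r" and "r < ln (101 / 100)"
    and "6 * r \<le> \<bar>s\<bar>" and "\<bar>s\<bar> \<le> ln (19 / 10)"
  shows "(\<lambda>L. a_act s ` L) ` K r \<inter> K r = {}"
proof (rule ccontr)
  assume "(\<lambda>L. a_act s ` L) ` K r \<inter> K r \<noteq> {}"
  then obtain L0 where L0: "L0 \<in> K r" and L1: "a_act s ` L0 \<in> K r" by blast
  obtain u v where uv: "L0 = lattice_of u v" and det: "fst u * snd v - fst v * snd u = 1"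
    using L0 unfolding K_def unimodular_lattices_def by blast
  define d where "d = exp (- r)"
  define t where "t = exp \<bar>s\<bar>"
  have dpos: "0 < d" by (simp add: d_def)
  have X: "d^2 * t * (3 - t) > 2" and t1: "1 < t" and t2: "t \<le> 19/10"
    using numeric[OF assms] by (simp_all add: d_def t_def)
  define X where "X = d^2 * t * (3 - t)"
  define q where "q = 2 / X"
  define th where "th = (1 + q) / 2"
  have Xp: "X > 2" using X X_def by simp
  have q: "0 < q" "q < 1" using Xp by (auto simp: q_def field_simps)
  have th: "0 < th" "th < 1" using q by (auto simp: th_def)
  have "th^2 - q = (1 - q)^2 / 4" by (simp add: th_def power2_eq_square field_simps)
  moreover have "(1 - q)^2 / 4 > 0" using q by simp
  ultimately have "th^2 > q" by linarith
  hence "th^2 * X > q * X" using Xp by simp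
  hence thX: "th^2 * X > 2" using Xp by (simp add: q_def)
  have area: "2 * (th * d) * (th * d * t + th * d * t * (2 - t)) > 4"
  proof -
    have "2 * (th * d) * (th * d * t + th * d * t * (2 - t)) = 2 * (th^2 * X)"
      by (simp add: X_def power2_eq_square algebra_simps)
    thus ?thesis using thX by linarith
  qed
  have hpos: "0 \<le> th * d * t * (2 - t)" using th dpos t1 t2 by simp
  have hleb: "th * d * t * (2 - t) \<le> th * d * t"
  proof -
    have "th * d * t * (2 - t) \<le> th * d * t * 1" using th dpos t1 by (intro mult_left_mono) auto
    thus ?thesis by simp
  qed
  have apos: "0 < th * d" using th dpos by simp
  have long: "supnorm w \<ge> d \<and> supnorm (a_act s w) \<ge> d"
    if mn: "(m, n) \<noteq> (0::int, 0::int)" and w: "w = (of_int m * fst u + of_int n * fst v, of_int m * snd u + of_int n * snd v)" for m n w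
  proof -
    have wL: "w \<in> L0" using w uv unfolding lattice_of_def by blast
    have w0: "w \<noteq> (0,0)"
    proof
      assume "w = (0,0)"
      hence e1: "of_int m * fst u + of_int n * fst v = 0" and e2: "of_int m * snd u + of_int n * snd v = 0"
        using w by auto
      have "(of_int m :: real) = snd v * (of_int m * fst u + of_int n * fst v) - fst v * (of_int m * snd u + of_int n * snd v)"
        using det by (simp add: algebra_simps) 
      hence "m = 0" using e1 e2 by simp
      have "(of_int n :: real) = fst u * (of_int m * snd u + of_int n * snd v) - snd u * (of_int m * fst u + of_int n * fst v)"
        using det by (simp add: algebra_simps)
      hence "n = 0" using e1 e2 by simp
      thus False using mn \<open>m = 0\<close> by simp
    qed
    have aw: "a_act s w \<in> a_act s ` L0" using wL by blast
    have aw0: "a_act s w \<noteq> (0,0)" using w0 by (cases w) (auto simp: a_act_def)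
    show ?thesis using K_supnorm[OF L0 wL w0] K_supnorm[OF L1 aw aw0] by (simp add: d_def)
  qed
  show False
  proof (cases "0 \<le> s")
    case True
    have D: "\<bar>fst u * snd v - fst v * snd u\<bar> = 1" using det by simp
    obtain m n :: int where mn: "(m, n) \<noteq> (0, 0)"
      and hx: "\<bar>of_int m * fst u + of_int n * fst v\<bar> \<le> th * d"
      and hy: "(th * d * t - th * d * t * (2 - t)) * \<bar>of_int m * fst u + of_int n * fst v\<bar> + th * d * \<bar>of_int m * snd u + of_int n * snd v\<bar> \<le> th * d * (th * d * t)"
      using hex_lattice_point[where a = "th * d" and b = "th * d * t" and h = "th * d * t * (2 - t)", OF apos hpos hleb area D]
      by blast
    define x where "x = of_int m * fst u + of_int n * fst v"
    define y where "y = of_int m * snd u + of_int n * snd v"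
    have sm: "(\<bar>x\<bar> < d \<and> \<bar>y\<bar> < d) \<or> (t * \<bar>x\<bar> < d \<and> \<bar>y\<bar> < d * t)"
      using hex_small[OF dpos t1 _ th] hx hy t2 unfolding x_def y_def by simp
    have lg: "supnorm (x, y) \<ge> d \<and> supnorm (a_act s (x, y)) \<ge> d"
      using long[OF mn] x_def y_def by simp
    have es: "exp s = t" "exp (- s) = 1 / t" using True by (simp_all add: t_def exp_minus inverse_eq_divide)
    have tp: "t > 0" using t1 by simp
    have "\<bar>y\<bar> / t < d" if "\<bar>y\<bar> < d * t" using that tp by (simp add: divide_less_eq)
    hence "supnorm (a_act s (x, y)) < d" if "t * \<bar>x\<bar> < d \<and> \<bar>y\<bar> < d * t"
      using that tp by (simp add: supnorm_def a_act_def es abs_mult)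
    moreover have "supnorm (x, y) < d" if "\<bar>x\<bar> < d \<and> \<bar>y\<bar> < d" using that by (simp add: supnorm_def)
    ultimately show False using sm lg by fastforce
  next
    case False
    have D: "\<bar>snd u * fst v - snd v * fst u\<bar> = 1" using det by (simp add: algebra_simps)
    obtain m n :: int where mn: "(m, n) \<noteq> (0, 0)"
      and hx: "\<bar>of_int m * snd u + of_int n * snd v\<bar> \<le> th * d"
      and hy: "(th * d * t - th * d * t * (2 - t)) * \<bar>of_int m * snd u + of_int n * snd v\<bar> + th * d * \<bar>of_int m * fst u + of_int n * fst v\<bar> \<le> th * d * (th * d * t)"
      using hex_lattice_point[where a = "th * d" and b = "th * d * t" and h = "th * d * t * (2 - t)", OF apos hpos hleb area D]
      by blast
    define x where "x = of_int m * snd u + of_int n * snd v"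
    define y where "y = of_int m * fst u + of_int n * fst v"
    have sm: "(\<bar>x\<bar> < d \<and> \<bar>y\<bar> < d) \<or> (t * \<bar>x\<bar> < d \<and> \<bar>y\<bar> < d * t)"
      using hex_small[OF dpos t1 _ th] hx hy t2 unfolding x_def y_def by simp
    have lg: "supnorm (y, x) \<ge> d \<and> supnorm (a_act s (y, x)) \<ge> d"
      using long[OF mn] x_def y_def by simp
    have es: "exp s = 1 / t" "exp (- s) = t" using False by (simp_all add: t_def exp_minus inverse_eq_divide)
    have tp: "t > 0" using t1 by simp
    have "\<bar>y\<bar> / t < d" if "\<bar>y\<bar> < d * t" using that tp by (simp add: divide_less_eq)
    hence "supnorm (a_act s (y, x)) < d" if "t * \<bar>x\<bar> < d \<and> \<bar>y\<bar> < d * t"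
      using that tp by (simp add: supnorm_def a_act_def es abs_mult)
    moreover have "supnorm (y, x) < d" if "\<bar>x\<bar> < d \<and> \<bar>y\<bar> < d" using that by (simp add: supnorm_def)
    ultimately show False using sm lg by fastforce
  qed
qed

end
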